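(* Let $\mathcal{H}$ be a connected $k$-uniform hypergraph on $n$ vertices with degrees $d_1,\dots,d_n$, and let $b_{i}>0$ for each $1\leq i\leq n$. For $1\le p\le n$ put \[ b_{p}^{\prime}=b_{p}^{-(k-1)}\sum_{\{p,p_{2},\cdots,p_{k}\}\in E(\mathcal{H})}b_{p_{2}}\cdots b_{p_{k}}. \] Then \[ \rho(\mathcal{Q}(\mathcal{H}))\leq\max_{e\in E(\mathcal{H})}\max_{\{i,j\}\subseteq e}\frac{d_{i}+d_{j}+\sqrt{(d_{i}-d_{j})^{2}+4b_{i}^{\prime}b_{j}^{\prime}}}{2}. \]
   Context: A $k$-uniform hypergraph $\mathcal{H}$ on vertex set $[n]$ has edges that are $k$-element subsets of $[n]$; $d_i$ is the number of edges containing vertex $i$. The sum over $\{p,p_2,\dots,p_k\}\in E(\mathcal{H})$ runs over the edges containing $p$, with $p_2,\dots,p_k$ the other vertices of that edge. The adjacency tensor $\mathcal{A}(\mathcal{H})$ has entries $\mathcal{A}_{i_1\cdots i_k}=\frac{1}{(k-1)!}$ if $\{i_1,\dots,i_k\}\in E(\mathcal{H})$ and $0$ otherwise; $\mathcal{D}(\mathcal{H})$ is the diagonal tensor with $\mathcal{D}_{i\cdots i}=d_i$; $\mathcal{Q}(\mathcal{H})=\mathcal{D}(\mathcal{H})+\mathcal{A}(\mathcal{H})$ is the signless Laplacian tensor. For a tensor $\mathcal{T}$ and $x\in\mathbb{C}^n$, $(\mathcal{T}x)_i=\sum_{i_2,\dots,i_k}\mathcal{T}_{ii_2\cdots i_k}x_{i_2}\cdots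 x_{i_k}$; $\lambda$ is an eigenvalue if $\mathcal{T}x=\lambda x^{[k-1]}$ for some nonzero $x$, where $x^{[k-1]}=(x_1^{k-1},\dots,x_n^{k-1})^T$; $\rho(\mathcal{T})$ is the maximum modulus of eigenvalues. *)

theory Defs
  imports Complex_Main
begin

text \<open>Vertex set [n] is rendered as {..<n} (0-indexed). A hypergraph is a set of edges E.\<close>

definition k_uniform_hypergraph :: "nat \<Rightarrow> nat \<Rightarrow> nat set set \<Rightarrow> bool" where
  "k_uniform_hypergraph n k E \<longleftrightarrow> (\<forall>e\<in>E. e \<subseteq> {..<n} \<and> card e = k)"

definition hdeg :: "nat set set \<Rightarrow> nat \<Rightarrow> nat" where
  "hdeg E i = card {e\<in>E. i \<in> e}"

definition hadjacent :: "nat set set \<Rightarrow> nat \<Rightarrow> nat \<Rightarrow> bool" where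
  "hadjacent E i j \<longleftrightarrow> (\<exists>e\<in>E. i \<in> e \<and> j \<in> e)"

definition hconnected :: "nat \<Rightarrow> nat set set \<Rightarrow> bool" where
  "hconnected n E \<longleftrightarrow> (\<forall>i<n. \<forall>j<n. (hadjacent E)\<^sup>*\<^sup>* i j)"

text \<open>Order-k tensors of dimension n: entries indexed by lists of length k over {..<n}.\<close>

definition adj_tensor :: "nat \<Rightarrow> nat set set \<Rightarrow> nat list \<Rightarrow> complex" where
  "adj_tensor k E is = (if set is \<in> E then 1 / of_nat (fact (k - 1)) else 0)"

definition deg_tensor :: "nat set set \<Rightarrow> nat list \<Rightarrow> complex" where
  "deg_tensor E is = (if is \<noteq> [] \<and> (\<forall>j\<in>set is. j = hd is) then of_nat (hdeg E (hd is)) else 0)"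

definition slap_tensor :: "nat \<Rightarrow> nat set set \<Rightarrow> nat list \<Rightarrow> complex" where
  "slap_tensor k E is = deg_tensor E is + adj_tensor k E is"

definition tensor_apply :: "nat \<Rightarrow> nat \<Rightarrow> (nat list \<Rightarrow> complex) \<Rightarrow> (nat \<Rightarrow> complex) \<Rightarrow> nat \<Rightarrow> complex" where
  "tensor_apply n k T x i =
     (\<Sum>is\<in>{is. length is = k - 1 \<and> set is \<subseteq> {..<n}}. T (i # is) * prod_list (map x is))"

definition tensor_eigenvalue :: "nat \<Rightarrow> nat \<Rightarrow> (nat list \<Rightarrow> complex) \<Rightarrow> complex \<Rightarrow> bool" where
  "tensor_eigenvalue n k T mu \<longleftrightarrow>
     (\<exists>x::nat \<Rightarrow> complex. (\<exists>i<n. x i \<noteq> 0) \<and>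
        (\<forall>i<n. tensor_apply n k T x i = mu * x i ^ (k - 1)))"

definition tensor_spectral_radius :: "nat \<Rightarrow> nat \<Rightarrow> (nat list \<Rightarrow> complex) \<Rightarrow> real" where
  "tensor_spectral_radius n k T = Sup {cmod mu | mu. tensor_eigenvalue n k T mu}"

definition bprime :: "nat \<Rightarrow> nat set set \<Rightarrow> (nat \<Rightarrow> real) \<Rightarrow> nat \<Rightarrow> real" where
  "bprime k E b p = (b p) powr (- real (k - 1)) * (\<Sum>e\<in>{e\<in>E. p \<in> e}. \<Prod>j\<in>e - {p}. b j)"

end

theory Submission
  imports Defs "HOL-Combinatorics.Multiset_Permutations" "Jordan_Normal_Form.Spectral_Radius"
begin

lemma fin_lists: "finite {ws::nat list. length ws = m \<and> set ws \<subseteq> {..<n}}"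
  using finite_lists_length_eq[of "{..<n}" m] by (simp add: conj_commute)

lemma apply_formula:
  assumes k2: "k \<ge> 2" and H: "k_uniform_hypergraph n k E" and p: "p < n"
  shows "tensor_apply n k (slap_tensor k E) x p =
     of_nat (hdeg E p) * x p ^ (k - 1) + (\<Sum>e\<in>{e\<in>E. p \<in> e}. \<Prod>j\<in>e - {p}. x j)"
proof -
  define L where "L = {ws::nat list. length ws = k - 1 \<and> set ws \<subseteq> {..<n}}"
  have finL: "finite L" unfolding L_def by (rule fin_lists)
  have finE: "finite E"
    by (rule finite_subset[of E "Pow {..<n}"]) (use H in \<open>auto simp: k_uniform_hypergraph_def\<close>)
  have "tensor_apply n k (slap_tensor k E) x p =
      (\<Sum>ws\<in>L. deg_tensor E (p#ws) * prod_list (map x ws)) +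
      (\<Sum>ws\<in>L. adj_tensor k E (p#ws) * prod_list (map x ws))"
    unfolding tensor_apply_def slap_tensor_def L_def[symmetric]
    by (simp add: distrib_right sum.distrib)
  moreover have "(\<Sum>ws\<in>L. deg_tensor E (p#ws) * prod_list (map x ws)) = of_nat (hdeg E p) * x p ^ (k - 1)"
  proof -
    have "(\<Sum>ws\<in>L. deg_tensor E (p#ws) * prod_list (map x ws)) =
        (\<Sum>ws\<in>L. if ws = replicate (k-1) p then of_nat (hdeg E p) * x p ^ (k - 1) else 0)"
    proof (rule sum.cong)
      fix ws assume "ws \<in> L"
      hence len: "length ws = k - 1" by (simp add: L_def)
      show "deg_tensor E (p#ws) * prod_list (map x ws) =
         (if ws = replicate (k-1) p then of_nat (hdeg E p) * x p ^ (k - 1) else 0)"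
      proof (cases "\<forall>j\<in>set ws. j = p")
        case True
        hence "ws = replicate (k-1) p" using len by (metis replicate_length_same)
        thus ?thesis by (simp add: deg_tensor_def prod_list_replicate)
      next
        case False
        hence "ws \<noteq> replicate (k-1) p" by auto
        thus ?thesis using False by (auto simp: deg_tensor_def)
      qed
    qed simp
    also have "\<dots> = of_nat (hdeg E p) * x p ^ (k - 1)"
      using p finL by (subst sum.delta[OF finL]) (auto simp: L_def set_replicate_conv_if)
    finally show ?thesis .
  qed
  moreover have "(\<Sum>ws\<in>L. adj_tensor k E (p#ws) * prod_list (map x ws)) =
      (\<Sum>e\<in>{e\<in>E. p \<in> e}. \<Prod>j\<in>e - {p}. x j)"
  proof -
    define S where "S = {ws\<in>L. set (p#ws) \<in> E}"
    have SU: "S = (\<Union>e\<in>{e\<in>E. p \<in> e}. permutations_of_set (e - {p}))"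
    proof (intro equalityI subsetI)
      fix ws assume "ws \<in> S"
      hence len: "length ws = k - 1" and inE: "set (p#ws) \<in> E" by (auto simp: S_def L_def)
      have "card (set (p#ws)) = k" using H inE by (auto simp: k_uniform_hypergraph_def)
      hence "distinct (p#ws)" using len k2 by (intro card_distinct) simp
      hence "ws \<in> permutations_of_set (set (p#ws) - {p})"
        by (auto simp: permutations_of_set_def)
      thus "ws \<in> (\<Union>e\<in>{e\<in>E. p \<in> e}. permutations_of_set (e - {p}))" using inE by auto
    next
      fix ws assume "ws \<in> (\<Union>e\<in>{e\<in>E. p \<in> e}. permutations_of_set (e - {p}))"
      then obtain e where e: "e \<in> E" "p \<in> e" and pe: "ws \<in> permutations_of_set (e - {p})" by auto
      have fe: "finite e" "card e = k" "e \<subseteq> {..<n}" using H e k2 card_ge_0_finite[of e]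
        by (auto simp: k_uniform_hypergraph_def)
      have se: "set (p#ws) = e" using pe e by (auto simp: permutations_of_set_def)
      have "length ws = card (e - {p})" by (rule length_finite_permutations_of_set[OF pe])
      hence "length ws = k - 1" using fe e by simp
      thus "ws \<in> S" using se e fe by (auto simp: S_def L_def)
    qed
    have "(\<Sum>ws\<in>L. adj_tensor k E (p#ws) * prod_list (map x ws)) =
        (\<Sum>ws\<in>S. (1 / of_nat (fact (k-1))) * prod_list (map x ws))"
      unfolding S_def sum.inter_filter[OF finL]
      by (rule sum.cong[OF refl]) (simp add: adj_tensor_def)
    also have "\<dots> = (\<Sum>e\<in>{e\<in>E. p \<in> e}. \<Sum>ws\<in>permutations_of_set (e - {p}). (1 / of_nat (fact (k-1))) * prod_list (map x ws))"
      unfolding SU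
    proof (rule sum.UNION_disjoint)
      show "\<forall>i\<in>{e \<in> E. p \<in> e}. \<forall>j\<in>{e \<in> E. p \<in> e}. i \<noteq> j \<longrightarrow>
          permutations_of_set (i - {p}) \<inter> permutations_of_set (j - {p}) = {}"
      proof (intro ballI impI)
        fix i j assume ij: "i \<in> {e \<in> E. p \<in> e}" "j \<in> {e \<in> E. p \<in> e}" "i \<noteq> j"
        have "i - {p} \<noteq> j - {p}" using ij by blast
        thus "permutations_of_set (i - {p}) \<inter> permutations_of_set (j - {p}) = {}"
          by (metis disjoint_iff permutations_of_setD(1))
      qed
    qed (simp_all add: finE)
    also have "\<dots> = (\<Sum>e\<in>{e\<in>E. p \<in> e}. \<Prod>j\<in>e - {p}. x j)"
    proof (rule sum.cong[OF refl])
      fix e assume e: "e \<in> {e\<in>E. p \<in> e}"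
      have fe: "finite e" "card e = k" using H e k2 card_ge_0_finite[of e]
        by (auto simp: k_uniform_hypergraph_def)
      have "(\<Sum>ws\<in>permutations_of_set (e - {p}). (1 / of_nat (fact (k-1))) * prod_list (map x ws))
         = (\<Sum>ws\<in>permutations_of_set (e - {p}). (1 / of_nat (fact (k-1))) * (\<Prod>j\<in>e - {p}. x j))"
        by (rule sum.cong[OF refl]) (metis permutations_of_setD prod.distinct_set_conv_list)
      also have "\<dots> = (\<Prod>j\<in>e - {p}. x j)"
        using fe e by (simp add: card_permutations_of_set)
      finally show "(\<Sum>ws\<in>permutations_of_set (e - {p}). (1 / of_nat (fact (k-1))) * prod_list (map x ws))
         = (\<Prod>j\<in>e - {p}. x j)" .
    qed
    finally show ?thesis .
  qed
  ultimately show ?thesis by simp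
qed

lemma quad_bound:
  fixes L a b c :: real
  assumes "a \<ge> 0" "b \<ge> 0" "c \<ge> 0" "\<bar>L - a\<bar> * \<bar>L - b\<bar> \<le> c"
  shows "L \<le> (a + b + sqrt ((a - b)^2 + 4 * c)) / 2"
proof -
  have s1: "\<bar>a - b\<bar> \<le> sqrt ((a - b)^2 + 4 * c)"
  proof -
    have "sqrt ((a - b)^2) \<le> sqrt ((a - b)^2 + 4 * c)" using assms(3) by (intro real_sqrt_le_mono) simp
    thus ?thesis by simp
  qed
  show ?thesis
  proof (cases "L \<le> max a b")
    case True
    have "L \<le> (a + b + \<bar>a - b\<bar>) / 2" using True by (auto simp: max_def abs_if split: if_splits)
    moreover have "(a + b + \<bar>a - b\<bar>) / 2 \<le> (a + b + sqrt ((a - b)^2 + 4 * c)) / 2"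
      using s1 by (intro divide_right_mono add_left_mono) auto
    ultimately show ?thesis by (rule order.trans)
  next
    case False
    hence "L > a" "L > b" by auto
    hence "(L - a) * (L - b) \<le> c" using assms(4) by simp
    hence "(2*L - a - b)^2 \<le> (a - b)^2 + 4 * c" by (simp add: power2_eq_square algebra_simps)
    hence "sqrt ((2*L - a - b)^2) \<le> sqrt ((a - b)^2 + 4 * c)" by (rule real_sqrt_le_mono)
    thus ?thesis using \<open>L > a\<close> \<open>L > b\<close> by simp
  qed
qed

lemma eig_bound:
  assumes k2: "k \<ge> 2" and H: "k_uniform_hypergraph n k E" and bpos: "\<And>i. i < n \<Longrightarrow> b i > 0"
    and p: "p < n"
    and eig: "tensor_apply n k (slap_tensor k E) x p = mu * x p ^ (k - 1)"
    and M: "M \<ge> 0" "\<And>e j. e \<in> E \<Longrightarrow> p \<in> e \<Longrightarrow> j \<in> e - {p} \<Longrightarrow> cmod (x j) / b j \<le> M"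
  shows "cmod (mu - of_nat (hdeg E p)) * (cmod (x p) / b p) ^ (k - 1) \<le> bprime k E b p * M ^ (k - 1)"
proof -
  define S where "S = (\<Sum>e\<in>{e\<in>E. p \<in> e}. \<Prod>j\<in>e - {p}. b j)"
  have eq: "(mu - of_nat (hdeg E p)) * x p ^ (k - 1) = (\<Sum>e\<in>{e\<in>E. p \<in> e}. \<Prod>j\<in>e - {p}. x j)"
    using apply_formula[OF k2 H p, of x] eig by (simp add: algebra_simps)
  have "cmod (mu - of_nat (hdeg E p)) * cmod (x p) ^ (k - 1) = cmod (\<Sum>e\<in>{e\<in>E. p \<in> e}. \<Prod>j\<in>e - {p}. x j)"
    by (metis eq norm_mult norm_power)
  also have "\<dots> \<le> (\<Sum>e\<in>{e\<in>E. p \<in> e}. cmod (\<Prod>j\<in>e - {p}. x j))" by (rule norm_sum)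
  also have "\<dots> \<le> (\<Sum>e\<in>{e\<in>E. p \<in> e}. (\<Prod>j\<in>e - {p}. b j) * M ^ (k - 1))"
  proof (rule sum_mono)
    fix e assume e: "e \<in> {e\<in>E. p \<in> e}"
    have fe: "finite e" "card e = k" "e \<subseteq> {..<n}" using H e k2 card_ge_0_finite[of e]
      by (auto simp: k_uniform_hypergraph_def)
    have bj: "\<And>j. j \<in> e - {p} \<Longrightarrow> b j > 0" using fe bpos by auto
    have "cmod (\<Prod>j\<in>e - {p}. x j) = (\<Prod>j\<in>e - {p}. b j * (cmod (x j) / b j))"
    proof -
      have "(\<Prod>j\<in>e - {p}. b j * (cmod (x j) / b j)) = (\<Prod>j\<in>e - {p}. cmod (x j))"
        by (rule prod.cong[OF refl]) (use bj in \<open>fastforce\<close>)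
      thus ?thesis by (simp add: prod_norm)
    qed
    also have "\<dots> = (\<Prod>j\<in>e - {p}. b j) * (\<Prod>j\<in>e - {p}. cmod (x j) / b j)"
      by (rule prod.distrib)
    also have "\<dots> \<le> (\<Prod>j\<in>e - {p}. b j) * (\<Prod>j\<in>e - {p}. M)"
      by (intro mult_left_mono prod_mono prod_nonneg) (use bj M e in \<open>auto intro!: divide_nonneg_pos bj less_imp_le[OF bj]\<close>)
    also have "(\<Prod>j\<in>e - {p}. M) = M ^ (k - 1)" using fe e by simp
    finally show "cmod (\<Prod>j\<in>e - {p}. x j) \<le> (\<Prod>j\<in>e - {p}. b j) * M ^ (k - 1)" .
  qed
  also have "\<dots> = S * M ^ (k - 1)" by (simp add: S_def sum_distrib_right)
  finally have A: "cmod (mu - of_nat (hdeg E p)) * cmod (x p) ^ (k - 1) \<le> S * M ^ (k - 1)" .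
  have bp: "b p > 0" using bpos p by simp
  have bpr: "bprime k E b p = S / b p ^ (k - 1)"
    unfolding bprime_def S_def using bp by (simp add: powr_minus_divide powr_realpow)
  have "cmod (mu - of_nat (hdeg E p)) * (cmod (x p) / b p) ^ (k - 1)
      = (cmod (mu - of_nat (hdeg E p)) * cmod (x p) ^ (k - 1)) / b p ^ (k - 1)"
    by (simp add: power_divide)
  also have "\<dots> \<le> (S * M ^ (k - 1)) / b p ^ (k - 1)"
    using A bp by (intro divide_right_mono) auto
  also have "\<dots> = bprime k E b p * M ^ (k - 1)" using bpr by simp
  finally show ?thesis .
qed

lemma rtranclp_first_step:
  assumes "R\<^sup>*\<^sup>* a c" shows "a \<noteq> c \<longrightarrow> (\<exists>z. z \<noteq> a \<and> R a z)"
  using assms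
proof (induction rule: converse_rtranclp_induct)
  case base thus ?case by simp
next
  case (step a y)
  thus ?case by (cases "y = a") auto
qed

lemma bprime_nonneg:
  assumes H: "k_uniform_hypergraph n k E" and bpos: "\<And>i. i < n \<Longrightarrow> b i > 0"
  shows "bprime k E b p \<ge> 0"
  unfolding bprime_def
proof (intro mult_nonneg_nonneg sum_nonneg prod_nonneg)
  fix e j assume "e \<in> {e \<in> E. p \<in> e}" "j \<in> e - {p}"
  hence "j < n" using H by (auto simp: k_uniform_hypergraph_def)
  thus "0 \<le> b j" using bpos less_imp_le by blast
qed simp

lemma all_eig_bound:
  assumes k2: "k \<ge> 2" and H: "k_uniform_hypergraph n k E" and conn: "hconnected n E"
    and En: "E \<noteq> {}" and bpos: "\<And>i. i < n \<Longrightarrow> b i > 0"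
    and ev: "tensor_eigenvalue n k (slap_tensor k E) mu"
  shows "cmod mu \<le> Max {(real (hdeg E i) + real (hdeg E j)
          + sqrt ((real (hdeg E i) - real (hdeg E j))^2 + 4 * bprime k E b i * bprime k E b j)) / 2
         | i j. \<exists>e\<in>E. i \<in> e \<and> j \<in> e \<and> i \<noteq> j}" (is "_ \<le> Max ?S")
proof -
  define f where "f = (\<lambda>i j. (real (hdeg E i) + real (hdeg E j)
          + sqrt ((real (hdeg E i) - real (hdeg E j))^2 + 4 * bprime k E b i * bprime k E b j)) / 2)"
  obtain x where nz: "\<exists>i<n. x i \<noteq> 0" and eq: "\<And>i. i < n \<Longrightarrow> tensor_apply n k (slap_tensor k E) x i = mu * x i ^ (k - 1)"
    using ev unfolding tensor_eigenvalue_def by blast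
  define y where "y = (\<lambda>j. cmod (x j) / b j)"
  obtain i0 where i0: "i0 < n" "x i0 \<noteq> 0" using nz by blast
  define m where "m = Max (y ` {..<n})"
  have "m \<in> y ` {..<n}" unfolding m_def using i0 by (intro Max_in) auto
  then obtain p where p: "p < n" "y p = m" by auto
  have pmax: "\<And>i. i < n \<Longrightarrow> y i \<le> y p" using p(2) unfolding m_def by (metis Max_ge finite_imageI finite_lessThan imageI lessThan_iff)
  have ypos: "y p > 0"
  proof -
    have "y i0 > 0" using i0 bpos by (simp add: y_def)
    thus ?thesis using pmax[OF i0(1)] by simp
  qed
  have y0: "\<And>j. j < n \<Longrightarrow> y j \<ge> 0" using bpos by (simp add: y_def less_imp_le)
  obtain e0 where e0: "e0 \<in> E" using En by blast
  have "card e0 = k" "e0 \<subseteq> {..<n}" using H e0 by (auto simp: k_uniform_hypergraph_def)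
  hence "k \<le> card {..<n}" by (metis card_mono finite_lessThan)
  hence n2: "n \<ge> 2" using k2 by simp
  define j0 where "j0 = (if p = 0 then 1 else 0::nat)"
  have j0: "j0 < n" "j0 \<noteq> p" using n2 by (auto simp: j0_def)
  have "(hadjacent E)\<^sup>*\<^sup>* p j0" using conn p j0 unfolding hconnected_def by blast
  then obtain z where z: "z \<noteq> p" "hadjacent E p z" using rtranclp_first_step j0 by metis
  define N where "N = {j. \<exists>e\<in>E. p \<in> e \<and> j \<in> e \<and> j \<noteq> p}"
  have Nsub: "N \<subseteq> {..<n}" using H by (auto simp: N_def k_uniform_hypergraph_def)
  have zN: "z \<in> N" using z by (auto simp: N_def hadjacent_def)
  define m2 where "m2 = Max (y ` N)"
  have finN: "finite N" using Nsub finite_subset by blast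
  have "m2 \<in> y ` N" unfolding m2_def using zN finN by (intro Max_in) auto
  then obtain q where q: "q \<in> N" "y q = m2" by auto
  have qmax: "\<And>j. j \<in> N \<Longrightarrow> y j \<le> y q" using q(2) finN unfolding m2_def by (metis Max_ge finite_imageI imageI)
  have qn: "q < n" using q Nsub by auto
  obtain eq0 where eq0: "eq0 \<in> E" "p \<in> eq0" "q \<in> eq0" "q \<noteq> p" using q by (auto simp: N_def)
  have yq0: "y q \<ge> 0" using y0 qn by simp
  define dp where "dp = real (hdeg E p)"
  define dq where "dq = real (hdeg E q)"
  define cp where "cp = bprime k E b p"
  define cq where "cq = bprime k E b q"
  have cp0: "cp \<ge> 0" "cq \<ge> 0" unfolding cp_def cq_def using bprime_nonneg[OF H bpos] by auto
  have I1: "cmod (mu - of_nat (hdeg E p)) * y p ^ (k - 1) \<le> cp * y q ^ (k - 1)"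
    unfolding y_def cp_def
    by (rule eig_bound[OF k2 H bpos p(1) eq[OF p(1)] yq0[unfolded y_def]])
       (auto intro!: qmax[unfolded y_def] simp: N_def)
  have I2: "cmod (mu - of_nat (hdeg E q)) * y q ^ (k - 1) \<le> cq * y p ^ (k - 1)"
    unfolding y_def cq_def
  proof (rule eig_bound[OF k2 H bpos qn eq[OF qn]])
    show "0 \<le> cmod (x p) / b p" using y0[OF p(1)] by (simp add: y_def)
    fix e j assume "e \<in> E" "q \<in> e" "j \<in> e - {q}"
    hence "j < n" using H by (auto simp: k_uniform_hypergraph_def)
    thus "cmod (x j) / b j \<le> cmod (x p) / b p" using pmax by (simp add: y_def)
  qed
  have km: "k - 1 > 0" using k2 by simp
  have prodb: "cmod (mu - of_nat (hdeg E p)) * cmod (mu - of_nat (hdeg E q)) \<le> cp * cq"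
  proof (cases "y q = 0")
    case True
    have "cp * y q ^ (k - 1) = 0" using True km by (simp add: zero_power)
    hence "cmod (mu - of_nat (hdeg E p)) * y p ^ (k - 1) \<le> 0" using I1 by linarith
    moreover have "y p ^ (k - 1) > 0" using ypos by simp
    ultimately have "cmod (mu - of_nat (hdeg E p)) = 0"
      by (metis mult_le_0_iff norm_ge_zero order_antisym_conv linorder_not_le)
    thus ?thesis using cp0 by simp
  next
    case False
    hence yqp: "y q > 0" using yq0 by simp
    define A where "A = cmod (mu - of_nat (hdeg E p))"
    define B where "B = cmod (mu - of_nat (hdeg E q))"
    define P where "P = y p ^ (k - 1)"
    define Q where "Q = y q ^ (k - 1)"
    have PQ: "P > 0" "Q > 0" using ypos yqp by (auto simp: P_def Q_def)
    have "(A * P) * (B * Q) \<le> (cp * Q) * (cq * P)"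
    proof (rule mult_mono)
      show "A * P \<le> cp * Q" using I1 unfolding A_def P_def Q_def .
      show "B * Q \<le> cq * P" using I2 unfolding B_def P_def Q_def .
      show "0 \<le> cp * Q" using cp0 PQ by simp
      show "0 \<le> B * Q" using PQ by (simp add: B_def)
    qed
    hence "(A * B) * (P * Q) \<le> (cp * cq) * (P * Q)" by (simp add: algebra_simps)
    hence "A * B \<le> cp * cq" using PQ by simp
    thus ?thesis by (simp add: A_def B_def)
  qed
  have tri: "\<And>d::nat. \<bar>cmod mu - real d\<bar> \<le> cmod (mu - of_nat d)"
    by (metis norm_of_nat norm_triangle_ineq3)
  have "\<bar>cmod mu - dp\<bar> * \<bar>cmod mu - dq\<bar> \<le> cp * cq"
    using prodb tri[of "hdeg E p"] tri[of "hdeg E q"] unfolding dp_def dq_def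
    by (meson abs_ge_zero mult_mono norm_ge_zero order_trans)
  hence "cmod mu \<le> (dp + dq + sqrt ((dp - dq)^2 + 4 * (cp * cq))) / 2"
    by (rule quad_bound[rotated 3]) (use cp0 in \<open>auto simp: dp_def dq_def\<close>)
  hence L: "cmod mu \<le> f p q" unfolding f_def dp_def dq_def cp_def cq_def by (simp add: mult.assoc)
  have inS: "f p q \<in> ?S" unfolding f_def using eq0 by blast
  have finS: "finite ?S"
  proof (rule finite_subset)
    show "?S \<subseteq> (\<lambda>(i,j). f i j) ` ({..<n} \<times> {..<n})"
      using H by (fastforce simp: f_def k_uniform_hypergraph_def)
  qed simp
  show ?thesis using L Max_ge[OF finS inS] by linarith
qed

lemma n_ge2:
  assumes k2: "k \<ge> 2" and H: "k_uniform_hypergraph n k E" and En: "E \<noteq> {}"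
  shows "n \<ge> 2"
proof -
  obtain e0 where e0: "e0 \<in> E" using En by blast
  have "card e0 = k" "e0 \<subseteq> {..<n}" using H e0 by (auto simp: k_uniform_hypergraph_def)
  hence "k \<le> card {..<n}" by (metis card_mono finite_lessThan)
  thus ?thesis using k2 by simp
qed

lemma ev_exists_k3:
  assumes k3: "k \<ge> 3" and H: "k_uniform_hypergraph n k E" and En: "E \<noteq> {}"
  shows "\<exists>mu. tensor_eigenvalue n k (slap_tensor k E) mu"
proof -
  have k2: "k \<ge> 2" using k3 by simp
  have n2: "n \<ge> 2" by (rule n_ge2[OF k2 H En])
  define x where "x = (\<lambda>j::nat. if j = 0 then (1::complex) else 0)"
  have "tensor_eigenvalue n k (slap_tensor k E) (of_nat (hdeg E 0))"
    unfolding tensor_eigenvalue_def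
  proof (rule exI[of _ x], intro conjI allI impI)
    show "\<exists>i<n. x i \<noteq> 0" using n2 by (intro exI[of _ 0]) (auto simp: x_def)
    fix i assume i: "i < n"
    have z: "(\<Sum>e\<in>{e\<in>E. i \<in> e}. \<Prod>j\<in>e - {i}. x j) = 0"
    proof (rule sum.neutral, rule ballI)
      fix e assume e: "e \<in> {e\<in>E. i \<in> e}"
      have fe: "finite e" "card e = k" using H e k2 card_ge_0_finite[of e]
        by (auto simp: k_uniform_hypergraph_def)
      have c: "card (e - {i}) \<ge> 2" using fe e k3 by simp
      have "\<exists>j\<in>e - {i}. j \<noteq> 0"
      proof (rule ccontr)
        assume "\<not> ?thesis"
        hence "e - {i} \<subseteq> {0}" by blast
        hence "card (e - {i}) \<le> 1" using card_mono[of "{0}" "e - {i}"] by simp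
        thus False using c by simp
      qed
      then obtain j where "j \<in> e - {i}" "j \<noteq> 0" by blast
      thus "(\<Prod>j\<in>e - {i}. x j) = 0" using fe by (intro prod_zero) (auto simp: x_def intro!: bexI[of _ j])
    qed
    have km: "k - 1 > 0" using k2 by simp
    show "tensor_apply n k (slap_tensor k E) x i = of_nat (hdeg E 0) * x i ^ (k - 1)"
      unfolding apply_formula[OF k2 H i] z using km by (auto simp: x_def zero_power)
  qed
  thus ?thesis by blast
qed

lemma apply2:
  "tensor_apply n 2 T x i = (\<Sum>j<n. T [i, j] * x j)"
proof -
  have L: "{ws::nat list. length ws = 2 - 1 \<and> set ws \<subseteq> {..<n}} = (\<lambda>j. [j]) ` {..<n}"
  proof (intro equalityI subsetI)
    fix ws assume "ws \<in> {ws::nat list. length ws = 2 - 1 \<and> set ws \<subseteq> {..<n}}"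
    then obtain j where "ws = [j]" "j < n" by (auto simp: length_Suc_conv)
    thus "ws \<in> (\<lambda>j. [j]) ` {..<n}" by auto
  qed auto
  have inj: "inj_on (\<lambda>j::nat. [j]) {..<n}" by (auto simp: inj_on_def)
  show ?thesis unfolding tensor_apply_def L sum.reindex[OF inj] by simp
qed

lemma ev_exists_k2:
  assumes H: "k_uniform_hypergraph n 2 E" and En: "E \<noteq> {}"
  shows "\<exists>mu. tensor_eigenvalue n 2 (slap_tensor 2 E) mu"
proof -
  have n2: "n \<ge> 2" by (rule n_ge2[OF _ H En]) simp
  define A where "A = mat n n (\<lambda>(i,j). slap_tensor 2 E [i,j])"
  have Ac: "A \<in> carrier_mat n n" by (simp add: A_def)
  obtain ev where "ev \<in> spectrum A" using spectrum_non_empty[OF Ac] n2 by auto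
  then obtain v where v: "v \<in> carrier_vec n" "v \<noteq> 0\<^sub>v n" "A *\<^sub>v v = ev \<cdot>\<^sub>v v"
    unfolding spectrum_def eigenvalue_def eigenvector_def using Ac by auto
  define x where "x = (\<lambda>j. if j < n then v $ j else 0)"
  have "tensor_eigenvalue n 2 (slap_tensor 2 E) ev"
    unfolding tensor_eigenvalue_def
  proof (rule exI[of _ x], intro conjI allI impI)
    show "\<exists>i<n. x i \<noteq> 0"
    proof (rule ccontr)
      assume "\<not> ?thesis"
      hence "v = 0\<^sub>v n" using v(1) by (intro eq_vecI) (auto simp: x_def)
      thus False using v(2) by simp
    qed
    fix i assume i: "i < n"
    have "(A *\<^sub>v v) $ i = (\<Sum>j<n. slap_tensor 2 E [i, j] * x j)"
      using i v(1) by (simp add: A_def scalar_prod_def x_def lessThan_atLeast0)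
    moreover have "(A *\<^sub>v v) $ i = ev * x i" using v i by (simp add: x_def)
    ultimately show "tensor_apply n 2 (slap_tensor 2 E) x i = ev * x i ^ (2 - 1)"
      unfolding apply2 by simp
  qed
  thus ?thesis by blast
qed

theorem theorem2p2:
  fixes n k :: nat and E :: "nat set set" and b :: "nat \<Rightarrow> real"
  assumes "k \<ge> 2"
    and "k_uniform_hypergraph n k E"
    and "hconnected n E"
    and "E \<noteq> {}"
    and "\<And>i. i < n \<Longrightarrow> b i > 0"
  shows "tensor_spectral_radius n k (slap_tensor k E) \<le>
    Max {(real (hdeg E i) + real (hdeg E j)
          + sqrt ((real (hdeg E i) - real (hdeg E j))^2 + 4 * bprime k E b i * bprime k E b j)) / 2
         | i j. \<exists>e\<in>E. i \<in> e \<and> j \<in> e \<and> i \<noteq> j}"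
proof -
  have ex: "\<exists>mu. tensor_eigenvalue n k (slap_tensor k E) mu"
  proof (cases "k = 2")
    case True thus ?thesis using ev_exists_k2 assms(2,4) by simp
  next
    case False thus ?thesis using ev_exists_k3 assms(1,2,4) by simp
  qed
  show ?thesis unfolding tensor_spectral_radius_def
    by (rule cSup_least) (use ex all_eig_bound[OF assms] in auto)
qed

end
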